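(* Let $R$ be a finite chain ring with $R/\operatorname{rad}R\cong\mathbb{F}_q$ and composition length $m\geq 3$ of ${}_RR$. Then there is no $(q^m+q^{m-1}+1,2)$-arc (hyperoval) in the projective Hjelmslev plane $\mathrm{PHG}(2,R)$.
   Context: A finite chain ring is a finite (not necessarily commutative) ring whose left ideals (equivalently right ideals) form a chain under inclusion; $q$ is the order of its residue field $R/\operatorname{rad}R$ and $m$ is the composition length of ${}_RR$, so $|R|=q^m$. The projective Hjelmslev plane $\mathrm{PHG}(2,R)$ has as points the free rank-$1$ submodules of $R^3_R$, as lines the free rank-$2$ submodules of $R^3_R$, with incidence given by set inclusion. An $(n,u)$-arc in $\mathrm{PHG}(2,R)$ is an $n$-multiset of points such that every line contains at most $u$ of its points, counted with multiplicity. *)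

theory Defs
  imports Main "HOL-Library.Multiset"
begin

definition left_ideal :: "('a::ring_1) set \<Rightarrow> bool" where
  "left_ideal I \<longleftrightarrow> 0 \<in> I \<and> (\<forall>x\<in>I. \<forall>y\<in>I. x + y \<in> I) \<and> (\<forall>x\<in>I. - x \<in> I)
     \<and> (\<forall>r. \<forall>x\<in>I. r * x \<in> I)"

definition chain_ring :: "'a::{ring_1,finite} itself \<Rightarrow> bool" where
  "chain_ring _ \<longleftrightarrow> (\<forall>I J :: 'a set. left_ideal I \<longrightarrow> left_ideal J \<longrightarrow> I \<subseteq> J \<or> J \<subseteq> I)"

definition maximal_left_ideal :: "('a::ring_1) set \<Rightarrow> bool" where
  "maximal_left_ideal I \<longleftrightarrow> left_ideal I \<and> I \<noteq> UNIV \<and>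
     (\<forall>J. left_ideal J \<longrightarrow> I \<subseteq> J \<longrightarrow> J = I \<or> J = UNIV)"

definition rad :: "'a::ring_1 itself \<Rightarrow> 'a set" where
  "rad _ = \<Inter> {I. maximal_left_ideal I}"

text \<open>q = |R / rad R|, the order of the residue field.\<close>
definition residue_order :: "'a::{ring_1,finite} itself \<Rightarrow> nat" where
  "residue_order T = card (UNIV :: 'a set) div card (rad T)"

text \<open>In a chain ring the left
  ideals form a chain R = I_0 > I_1 > ... > I_m = 0, which is the unique composition
  series, so the composition length is (number of left ideals) - 1.\<close>
definition chain_length :: "'a::{ring_1,finite} itself \<Rightarrow> nat" where
  "chain_length _ = card {I :: 'a set. left_ideal I} - 1"

type_synonym 'a vec3 = "'a \<times> 'a \<times> 'a"

definition smul :: "'a::ring_1 vec3 \<Rightarrow> 'a \<Rightarrow> 'a vec3" where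
  "smul x r = (fst x * r, fst (snd x) * r, snd (snd x) * r)"

definition vadd :: "'a::ring_1 vec3 \<Rightarrow> 'a vec3 \<Rightarrow> 'a vec3" where
  "vadd x y = (fst x + fst y, fst (snd x) + fst (snd y), snd (snd x) + snd (snd y))"

definition hj_point :: "'a::ring_1 vec3 set \<Rightarrow> bool" where
  "hj_point S \<longleftrightarrow> (\<exists>x. S = {smul x r | r. True} \<and> (\<forall>r. smul x r = (0,0,0) \<longrightarrow> r = 0))"

definition hj_line :: "'a::ring_1 vec3 set \<Rightarrow> bool" where
  "hj_line S \<longleftrightarrow> (\<exists>x y. S = {vadd (smul x r) (smul y s) | r s. True} \<and>
       (\<forall>r s. vadd (smul x r) (smul y s) = (0,0,0) \<longrightarrow> r = 0 \<and> s = 0))"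

definition hj_arc :: "'a::ring_1 vec3 set multiset \<Rightarrow> nat \<Rightarrow> nat \<Rightarrow> bool" where
  "hj_arc A n u \<longleftrightarrow> (\<forall>p\<in>#A. hj_point p) \<and> size A = n \<and>
     (\<forall>L. hj_line L \<longrightarrow> size (filter_mset (\<lambda>p. p \<subseteq> L) A) \<le> u)"

end

theory Submission
  imports Defs
begin



locale cr =
  fixes T :: "'a::{ring_1,finite} itself"
  assumes chain: "chain_ring T"
begin

lemma chainI: "left_ideal (I::'a set) \<Longrightarrow> left_ideal J \<Longrightarrow> I \<subseteq> J \<or> J \<subseteq> I"
  using chain unfolding chain_ring_def by blast

lemma li_UNIV: "left_ideal (UNIV::'a set)" by (simp add: left_ideal_def)
lemma li_zero: "left_ideal {0::'a}" by (simp add: left_ideal_def)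

lemma dedekind: fixes x y :: 'a assumes "y * x = 1" shows "x * y = 1"
proof -
  have "inj (\<lambda>r. x * r)"
  proof (rule injI)
    fix a b assume "x * a = x * b"
    then have "y * x * a = y * x * b" by (simp add: mult.assoc)
    then show "a = b" using assms by simp
  qed
  then have "surj (\<lambda>r. x * r)" by (simp add: finite_UNIV_inj_surj)
  then obtain z where z: "x * z = 1" by (metis surjD)
  have "y = y * (x * z)" using z by simp
  also have "\<dots> = z" by (simp add: mult.assoc[symmetric] assms)
  finally show ?thesis using z by simp
qed

lemma ex_max: "\<exists>M0. maximal_left_ideal (M0::'a set)"
proof -
  let ?S = "{I::'a set. left_ideal I \<and> I \<noteq> UNIV}"
  have "{0::'a} \<noteq> UNIV" by (metis singletonD UNIV_I zero_neq_one)
  then have "{0} \<in> ?S" using li_zero by auto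
  then obtain m where m: "m \<in> ?S" "\<forall>b\<in>?S. m \<le> b \<longrightarrow> m = b"
    using finite_has_maximal[of ?S, OF finite] by blast
  have "maximal_left_ideal m" unfolding maximal_left_ideal_def
  proof (intro conjI allI impI)
    show "left_ideal m" "m \<noteq> UNIV" using m(1) by auto
  next
    fix J assume "left_ideal J" "m \<subseteq> J"
    then show "J = m \<or> J = UNIV" using m(2) by blast
  qed
  then show ?thesis by blast
qed

lemma max_unique: assumes "maximal_left_ideal (I::'a set)" "maximal_left_ideal J" shows "I = J"
proof -
  have a: "left_ideal I" "I \<noteq> UNIV" "\<forall>K. left_ideal K \<longrightarrow> I \<subseteq> K \<longrightarrow> K = I \<or> K = UNIV"
    using assms(1) unfolding maximal_left_ideal_def by auto
  have b: "left_ideal J" "J \<noteq> UNIV" "\<forall>K. left_ideal K \<longrightarrow> J \<subseteq> K \<longrightarrow> K = J \<or> K = UNIV"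
    using assms(2) unfolding maximal_left_ideal_def by auto
  have "I \<subseteq> J \<or> J \<subseteq> I" using chainI[OF a(1) b(1)] .
  then show ?thesis
  proof
    assume "I \<subseteq> J" then show ?thesis using a(3) b(1) b(2) by metis
  next
    assume "J \<subseteq> I" then show ?thesis using b(3) a(1) a(2) by metis
  qed
qed

definition "M = rad T"

lemma M_max: "maximal_left_ideal M"
proof -
  obtain M0 :: "'a set" where m: "maximal_left_ideal M0" using ex_max by blast
  have "{I. maximal_left_ideal I} = {M0}" using m max_unique by blast
  then show ?thesis using m unfolding M_def rad_def by simp
qed

lemma M_li: "left_ideal M" and M_ne: "M \<noteq> UNIV"
  using M_max unfolding maximal_left_ideal_def by auto

lemma M_zero: "0 \<in> M" and M_add: "a \<in> M \<Longrightarrow> b \<in> M \<Longrightarrow> a + b \<in> M"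
  and M_uminus: "a \<in> M \<Longrightarrow> - a \<in> M" and M_lmult: "a \<in> M \<Longrightarrow> r * a \<in> M"
  using M_li unfolding left_ideal_def by auto

lemma M_diff: "a \<in> M \<Longrightarrow> b \<in> M \<Longrightarrow> a - b \<in> M"
  using M_add M_uminus by (metis diff_conv_add_uminus)

lemma one_notin_M: "(1::'a) \<notin> M"
proof
  assume "(1::'a) \<in> M"
  then have "\<And>r. r \<in> M" using M_lmult[of 1] by (metis mult.right_neutral)
  then have "M = UNIV" by blast
  then show False using M_ne by blast
qed

lemma proper_sub_M: assumes "left_ideal (I::'a set)" "I \<noteq> UNIV" shows "I \<subseteq> M"
proof -
  have "I \<subseteq> M \<or> M \<subseteq> I" using chainI[OF assms(1) M_li] .
  moreover have "M \<subseteq> I \<Longrightarrow> I = M"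
    using M_max assms unfolding maximal_left_ideal_def by metis
  ultimately show ?thesis by blast
qed

lemma M_iff: "x \<in> M \<longleftrightarrow> \<not> (\<exists>y. y * x = 1)"
proof
  assume "x \<in> M" then show "\<not> (\<exists>y. y * x = 1)" using M_lmult one_notin_M by metis
next
  assume a: "\<not> (\<exists>y. y * x = 1)"
  let ?Rx = "{r * x | r. True}"
  have li: "left_ideal ?Rx" unfolding left_ideal_def
  proof (intro conjI ballI allI)
    show "0 \<in> ?Rx" by (rule CollectI, rule exI[of _ 0]) simp
  next
    fix u v assume "u \<in> ?Rx" "v \<in> ?Rx"
    then obtain r s where "u = r * x" "v = s * x" by blast
    then have "u + v = (r + s) * x" by (simp add: distrib_right)
    then show "u + v \<in> ?Rx" by blast
  next
    fix u assume "u \<in> ?Rx"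
    then obtain r where "u = r * x" by blast
    then have "- u = (- r) * x" by simp
    then show "- u \<in> ?Rx" by blast
  next
    fix c u assume "u \<in> ?Rx"
    then obtain r where "u = r * x" by blast
    then have "c * u = (c * r) * x" by (simp add: mult.assoc)
    then show "c * u \<in> ?Rx" by blast
  qed
  have "1 \<notin> ?Rx" using a by auto
  then have "?Rx \<noteq> UNIV" by blast
  then have sub: "?Rx \<subseteq> M" by (rule proper_sub_M[OF li])
  have "x \<in> ?Rx" by (rule CollectI, rule exI[of _ 1]) simp
  then show "x \<in> M" by (rule subsetD[OF sub])
qed

lemma unit_inv: assumes "x \<notin> M" shows "\<exists>y. y * x = 1 \<and> x * y = 1"
proof -
  obtain y where "y * x = 1" using assms M_iff by auto
  then show ?thesis using dedekind by blast
qed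

definition "inv' x = (SOME y. y * x = 1)"

lemma inv': assumes "x \<notin> M" shows "inv' x * x = 1" "x * inv' x = 1"
proof -
  have e: "\<exists>y. y * x = 1" using assms M_iff by auto
  have "inv' x * x = 1" unfolding inv'_def by (rule someI_ex[OF e])
  then show "inv' x * x = 1" "x * inv' x = 1" using dedekind by auto
qed

lemma M_rmult: assumes "x \<in> M" shows "x * r \<in> M"
proof (rule ccontr)
  assume "x * r \<notin> M"
  then obtain v where "v * (x * r) = 1" using M_iff by blast
  then have "x * r * v = 1" using dedekind by blast
  then have "(r * v) * x = 1" using dedekind by (simp add: mult.assoc)
  then show False using assms M_iff by blast
qed

lemma one_minus_unit: "\<mu> \<in> M \<Longrightarrow> (1 - \<mu>) \<notin> M"
proof
  assume "\<mu> \<in> M" "1 - \<mu> \<in> M"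
  then have "(1 - \<mu>) + \<mu> \<in> M" by (rule M_add[rotated])
  then show False using one_notin_M by simp
qed

lemma left_cancel_one_minus: assumes "\<mu> \<in> M" "(1 - \<mu>) * x \<in> (J::'a set)" "left_ideal J" shows "x \<in> J"
proof -
  obtain v where "v * (1 - \<mu>) = 1" using one_minus_unit[OF assms(1)] M_iff by blast
  then have "x = v * ((1 - \<mu>) * x)" by (simp add: mult.assoc[symmetric])
  then show ?thesis using assms(2,3) unfolding left_ideal_def by metis
qed

lemma ann_exists: assumes "\<alpha> \<in> M" shows "\<exists>\<mu>. \<mu> \<noteq> 0 \<and> \<mu> * \<alpha> = 0"
proof (rule ccontr)
  assume a: "\<not> ?thesis"
  have "inj (\<lambda>r. r * \<alpha>)"
  proof (rule injI)
    fix a b assume "a * \<alpha> = b * \<alpha>"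
    then have "(a - b) * \<alpha> = 0" by (simp add: left_diff_distrib)
    then show "a = b" using a by (metis eq_iff_diff_eq_0)
  qed
  then have "surj (\<lambda>r. r * \<alpha>)" by (simp add: finite_UNIV_inj_surj)
  then obtain v where "v * \<alpha> = 1" by (metis surjD)
  then show False using assms M_iff by blast
qed

end


lemma sum_ind: "finite I \<Longrightarrow> (\<Sum>i\<in>I. (if P i then 1 else 0::nat)) = card {i\<in>I. P i}"
  by (simp add: sum.If_cases Int_def conj_commute)

lemma sum_filter_swap:
  assumes "finite I"
  shows "(\<Sum>i\<in>I. size (filter_mset (\<lambda>p. p \<subseteq> L i) K)) = sum_mset (image_mset (\<lambda>p. card {i\<in>I. p \<subseteq> L i}) K)"
proof (induction K)
  case empty
  then show ?case by simp
next
  case (add x K)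
  have "(\<Sum>i\<in>I. size (filter_mset (\<lambda>p. p \<subseteq> L i) (add_mset x K)))
      = (\<Sum>i\<in>I. size (filter_mset (\<lambda>p. p \<subseteq> L i) K) + (if x \<subseteq> L i then 1 else 0))"
    by (intro sum.cong) auto
  also have "\<dots> = (\<Sum>i\<in>I. size (filter_mset (\<lambda>p. p \<subseteq> L i) K)) + card {i\<in>I. x \<subseteq> L i}"
    by (simp add: sum.distrib sum_ind[OF assms])
  finally show ?case using add by simp
qed

lemma size_le_summ: "(\<forall>p\<in>#K. 1 \<le> f p) \<Longrightarrow> size K \<le> sum_mset (image_mset f K)"
  by (induction K) auto

lemma count_lemma:
  assumes arc: "hj_arc K n 2" and sub: "add_mset P {#Q#} \<subseteq># K" and fin: "finite I"
    and lines: "\<forall>i\<in>I. hj_line (L i) \<and> P \<subseteq> L i"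
    and cover: "\<forall>Z. hj_point Z \<longrightarrow> (\<exists>i\<in>I. Z \<subseteq> L i)"
    and ij: "i \<in> I" "j \<in> I" "i \<noteq> j" "Q \<subseteq> L i" "Q \<subseteq> L j"
  shows "n \<le> card I"
proof -
  have pts: "\<forall>p\<in>#K. hj_point p" and sz: "size K = n"
    and bd: "\<forall>L. hj_line L \<longrightarrow> size (filter_mset (\<lambda>p. p \<subseteq> L) K) \<le> 2"
    using arc unfolding hj_arc_def by auto
  define c where "c p = card {i\<in>I. p \<subseteq> L i}" for p
  have "sum_mset (image_mset c K) = (\<Sum>i\<in>I. size (filter_mset (\<lambda>p. p \<subseteq> L i) K))"
    unfolding c_def using sum_filter_swap[OF fin, of L K] by simp
  also have "\<dots> \<le> (\<Sum>i\<in>I. 2)" using bd lines by (intro sum_mono) auto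
  finally have up: "sum_mset (image_mset c K) \<le> 2 * card I" by simp
  define K' where "K' = K - add_mset P {#Q#}"
  have KK: "K = add_mset P (add_mset Q K')"
    unfolding K'_def using subset_mset.add_diff_inverse[OF sub] by simp
  have cP: "c P = card I" unfolding c_def using lines by (metis (mono_tags, lifting) Collect_cong Collect_mem_eq)
  have "{i, j} \<subseteq> {i\<in>I. Q \<subseteq> L i}" using ij by auto
  then have "card {i, j} \<le> c Q" unfolding c_def using fin by (intro card_mono) auto
  then have cQ: "2 \<le> c Q" using ij by simp
  have "\<forall>p\<in>#K'. 1 \<le> c p"
  proof
    fix p assume "p \<in># K'"
    then have "hj_point p" using pts KK by auto
    then obtain i where "i \<in> I" "p \<subseteq> L i" using cover by blast
    then have "{i\<in>I. p \<subseteq> L i} \<noteq> {}" by blast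
    then show "1 \<le> c p" unfolding c_def using fin by (simp add: Suc_le_eq card_gt_0_iff)
  qed
  then have cK': "size K' \<le> sum_mset (image_mset c K')" by (rule size_le_summ)
  have "sum_mset (image_mset c K) = c P + c Q + sum_mset (image_mset c K')" unfolding KK by simp
  moreover have "n = size K' + 2" using sz KK by simp
  ultimately show ?thesis using up cP cQ cK' by linarith
qed


context cr begin

definition "coset a = (\<lambda>m. a + m) ` M"
definition "CC = range coset"
definition "q = card (UNIV::'a set) div card M"
definition "\<rho> a = (SOME b. b \<in> coset a)"

lemma coset_eq: "coset a = coset b \<longleftrightarrow> a - b \<in> M"
proof
  assume "coset a = coset b"
  moreover have "a \<in> coset a" unfolding coset_def using M_zero by force
  ultimately obtain m where "m \<in> M" "a = b + m" unfolding coset_def by auto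
  then show "a - b \<in> M" by simp
next
  assume d: "a - b \<in> M"
  have 1: "coset a \<subseteq> coset b" if "a - b \<in> M" for a b
  proof
    fix x assume "x \<in> coset a"
    then obtain m where m: "m \<in> M" "x = a + m" unfolding coset_def by auto
    have "x = b + ((a - b) + m)" using m by simp
    moreover have "(a - b) + m \<in> M" using M_add that m by blast
    ultimately show "x \<in> coset b" unfolding coset_def by blast
  qed
  have "b - a \<in> M" using M_uminus[OF d] by simp
  then show "coset a = coset b" using 1 d by blast
qed

lemma coset_disj: assumes "x \<in> coset a" "x \<in> coset b" shows "coset a = coset b"
proof -
  obtain m m' where "m \<in> M" "m' \<in> M" "x = a + m" "x = b + m'" using assms unfolding coset_def by auto
  then have "a + m = b + m'" by simp
  then have "a - b = m' - m" by (simp add: algebra_simps)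
  then show ?thesis using coset_eq M_diff \<open>m \<in> M\<close> \<open>m' \<in> M\<close> by metis
qed

lemma card_coset: "card (coset a) = card M"
  unfolding coset_def by (rule card_image) (simp add: inj_on_def)

lemma CC_card: "card M * card CC = card (UNIV::'a set)"
proof -
  have self: "a \<in> coset a" for a
  proof -
    have "a = a + 0" by simp
    then show ?thesis unfolding coset_def using M_zero by (rule image_eqI)
  qed
  have u: "\<Union>CC = UNIV" unfolding CC_def using self by blast
  have p1: "\<forall>c\<in>CC. card c = card M" unfolding CC_def using card_coset by blast
  have p2: "\<forall>c1\<in>CC. \<forall>c2\<in>CC. c1 \<noteq> c2 \<longrightarrow> c1 \<inter> c2 = {}"
  proof (intro ballI impI)
    fix c1 c2 assume "c1 \<in> CC" "c2 \<in> CC" "c1 \<noteq> c2"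
    then obtain a b where "c1 = coset a" "c2 = coset b" unfolding CC_def by blast
    then show "c1 \<inter> c2 = {}" using coset_disj \<open>c1 \<noteq> c2\<close> by blast
  qed
  have "card M * card CC = card (\<Union>CC)"
    apply (rule card_partition)
       apply simp
      apply simp
    using p1 apply blast
    using p2 apply blast
    done
  then show ?thesis using u by simp
qed

lemma cardM_pos: "card M > 0" using M_zero by (auto simp: card_gt_0_iff)

lemma q_eq: "q = card CC"
proof -
  have "q = card M * card CC div card M" unfolding q_def using CC_card by simp
  also have "\<dots> = card CC" using cardM_pos by simp
  finally show ?thesis .
qed

lemma q_ge2: "q \<ge> 2"
proof -
  have "coset 0 \<noteq> coset 1"
  proof
    assume "coset 0 = coset 1"
    then have "0 - 1 \<in> M" using coset_eq by blast
    then have "- (0 - 1) \<in> M" by (rule M_uminus)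
    then show False using one_notin_M by simp
  qed
  moreover have "coset 0 \<in> CC" "coset 1 \<in> CC" unfolding CC_def by auto
  ultimately have "card {coset 0, coset 1} \<le> card CC" by (intro card_mono) auto
  then show ?thesis using q_eq \<open>coset 0 \<noteq> coset 1\<close> by simp
qed

lemma rho_in: "\<rho> a \<in> coset a"
  unfolding \<rho>_def by (rule someI[of _ a]) (unfold coset_def, use M_zero in force)

lemma rho_diff: "a - \<rho> a \<in> M"
proof -
  obtain m where "m \<in> M" "\<rho> a = a + m" using rho_in unfolding coset_def by auto
  then show ?thesis using M_uminus by simp
qed

lemma rho_eq: "\<rho> a = \<rho> b \<longleftrightarrow> a - b \<in> M"
proof
  assume "\<rho> a = \<rho> b"
  then have "coset a = coset b" using rho_in coset_disj by metis
  then show "a - b \<in> M" using coset_eq by blast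
next
  assume "a - b \<in> M"
  then have "coset a = coset b" using coset_eq by blast
  then show "\<rho> a = \<rho> b" unfolding \<rho>_def by simp
qed

lemma rho_card: "card (range \<rho>) \<le> q"
proof -
  have "range \<rho> = (\<lambda>c. SOME b. b \<in> c) ` CC" unfolding CC_def \<rho>_def by auto
  then show ?thesis using q_eq card_image_le[of CC] by simp
qed

lemma li_comb: assumes "left_ideal J" "left_ideal A"
  shows "left_ideal {a * x + j | a j. a \<in> A \<and> j \<in> J}" (is "left_ideal ?K")
  unfolding left_ideal_def
proof (intro conjI ballI allI)
  have "0 \<in> A" "0 \<in> J" using assms unfolding left_ideal_def by auto
  then show "0 \<in> ?K" by force
next
  fix u v assume "u \<in> ?K" "v \<in> ?K"
  then obtain a j a' j' where "a \<in> A" "j \<in> J" "a' \<in> A" "j' \<in> J" "u = a * x + j" "v = a' * x + j'" by blast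
  moreover have "u + v = (a + a') * x + (j + j')" using calculation by (simp add: distrib_right algebra_simps)
  moreover have "a + a' \<in> A" "j + j' \<in> J" using calculation assms unfolding left_ideal_def by auto
  ultimately show "u + v \<in> ?K" by blast
next
  fix u assume "u \<in> ?K"
  then obtain a j where "a \<in> A" "j \<in> J" "u = a * x + j" by blast
  moreover have "- u = (- a) * x + (- j)" using calculation by simp
  moreover have "- a \<in> A" "- j \<in> J" using calculation assms unfolding left_ideal_def by auto
  ultimately show "- u \<in> ?K" by blast
next
  fix c u assume "u \<in> ?K"
  then obtain a j where "a \<in> A" "j \<in> J" "u = a * x + j" by blast
  moreover have "c * u = (c * a) * x + (c * j)" using calculation by (simp add: distrib_left mult.assoc)
  moreover have "c * a \<in> A" "c * j \<in> J" using calculation assms unfolding left_ideal_def by auto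
  ultimately show "c * u \<in> ?K" by blast
qed

lemma li_0: "left_ideal I \<Longrightarrow> 0 \<in> I" unfolding left_ideal_def by blast
lemma li_add: "left_ideal I \<Longrightarrow> a \<in> I \<Longrightarrow> b \<in> I \<Longrightarrow> a + b \<in> I" unfolding left_ideal_def by blast
lemma li_mult: "left_ideal I \<Longrightarrow> a \<in> I \<Longrightarrow> r * a \<in> I" unfolding left_ideal_def by blast

lemma ideal_bound: "left_ideal (I::'a set) \<Longrightarrow> card I \<le> q ^ card {J. left_ideal J \<and> J \<subset> I}"
proof (induction "card I" arbitrary: I rule: less_induct)
  case less
  let ?S = "{J. left_ideal J \<and> J \<subset> I}"
  have lI: "left_ideal I" by (rule less.prems)
  show ?case
  proof (cases "I = {0}")
    case True
    then have e: "?S = {}" using li_0 by blast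
    have "card I = 1" using True by simp
    moreover have "card ?S = 0" by (subst e) simp
    ultimately show ?thesis by (metis le_refl power_0)
  next
    case False
    have "{0} \<subset> I" using li_0[OF lI] False by blast
    then have "{0} \<in> ?S" using li_zero by blast
    then have "?S \<noteq> {}" by blast
    then obtain J where J: "J \<in> ?S" "\<forall>b\<in>?S. J \<le> b \<longrightarrow> J = b"
      using finite_has_maximal[of ?S, OF finite] by blast
    have lJ: "left_ideal J" and JI: "J \<subset> I" using J(1) by auto
    have betw: "K = J \<or> K = I" if "left_ideal K" "J \<subseteq> K" "K \<subseteq> I" for K
    proof (rule ccontr)
      assume "\<not> (K = J \<or> K = I)"
      then have "K \<noteq> J" "K \<noteq> I" by auto
      then have "K \<in> ?S" using that by blast
      then have "J = K" using J(2) that(2) by blast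
      then show False using \<open>K \<noteq> J\<close> by simp
    qed
    let ?SJ = "{K. left_ideal K \<and> K \<subset> J}"
    have SS: "?S = insert J ?SJ"
    proof (intro equalityI subsetI)
      fix K assume K: "K \<in> ?S"
      then have lK: "left_ideal K" and KI: "K \<subset> I" by auto
      have "K \<subseteq> J \<or> J \<subseteq> K" using chainI[OF lK lJ] .
      then show "K \<in> insert J ?SJ"
      proof
        assume "J \<subseteq> K"
        then have "J = K" using J(2) K by blast
        then show ?thesis by simp
      next
        assume "K \<subseteq> J"
        then show ?thesis using lK by blast
      qed
    next
      fix K assume "K \<in> insert J ?SJ"
      then show "K \<in> ?S" using J(1) JI by auto
    qed
    have finSJ: "finite ?SJ" by (rule finite)
    have nJ: "J \<notin> ?SJ" by blast
    have cS: "card ?S = Suc (card ?SJ)" unfolding SS using card_insert_disjoint[OF finSJ nJ] .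
    have cJ: "card J < card I" using JI by (simp add: psubset_card_mono)
    have IH: "card J \<le> q ^ card ?SJ" using less.hyps[OF cJ lJ] .
    obtain x where x: "x \<in> I" "x \<notin> J" using JI by blast
    let ?K1 = "{a * x + j | a j. a \<in> M \<and> j \<in> J}"
    have K1: "left_ideal ?K1" by (rule li_comb[OF lJ M_li])
    have JK1: "J \<subseteq> ?K1"
    proof
      fix j assume "j \<in> J"
      moreover have "j = 0 * x + j" by simp
      ultimately show "j \<in> ?K1" using M_zero by blast
    qed
    have K1I: "?K1 \<subseteq> I"
    proof
      fix z assume "z \<in> ?K1"
      then obtain a j where "z = a * x + j" "j \<in> J" by blast
      moreover have "a * x \<in> I" using li_mult[OF lI x(1)] .
      moreover have "j \<in> I" using \<open>j \<in> J\<close> JI by blast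
      ultimately show "z \<in> I" using li_add[OF lI] by simp
    qed
    have xK1: "x \<notin> ?K1"
    proof
      assume "x \<in> ?K1"
      then obtain a j where aj: "a \<in> M" "j \<in> J" "x = a * x + j" by blast
      have "(1 - a) * x = x - a * x" by (simp add: left_diff_distrib)
      also have "\<dots> = j" using aj(3) by (metis add_diff_cancel_left')
      finally have "(1 - a) * x = j" .
      then have "x \<in> J" using left_cancel_one_minus[OF aj(1) _ lJ] aj(2) by simp
      then show False using x by blast
    qed
    have "?K1 \<noteq> I" using xK1 x(1) by blast
    then have K1J: "?K1 = J" using betw[OF K1 JK1 K1I] by blast
    have Mx: "a * x \<in> J" if "a \<in> M" for a
    proof -
      have "a * x + 0 \<in> ?K1" using that li_0[OF lJ] by blast
      then show ?thesis using K1J by simp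
    qed
    let ?K2 = "{a * x + j | a j. a \<in> UNIV \<and> j \<in> J}"
    have K2: "left_ideal ?K2" by (rule li_comb[OF lJ li_UNIV])
    have JK2: "J \<subseteq> ?K2"
    proof
      fix j assume "j \<in> J"
      moreover have "j = 0 * x + j" by simp
      ultimately show "j \<in> ?K2" by blast
    qed
    have K2I: "?K2 \<subseteq> I"
    proof
      fix z assume "z \<in> ?K2"
      then obtain a j where "z = a * x + j" "j \<in> J" by blast
      moreover have "a * x \<in> I" using li_mult[OF lI x(1)] .
      moreover have "j \<in> I" using \<open>j \<in> J\<close> JI by blast
      ultimately show "z \<in> I" using li_add[OF lI] by simp
    qed
    have xK2: "x \<in> ?K2"
    proof -
      have "x = 1 * x + 0" by simp
      then show ?thesis using li_0[OF lJ] by blast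
    qed
    have "?K2 \<noteq> J" using xK2 x(2) by blast
    then have K2I': "?K2 = I" using betw[OF K2 JK2 K2I] by blast
    let ?f = "\<lambda>(a, j). a * x + j"
    have sub: "I \<subseteq> ?f ` (range \<rho> \<times> J)"
    proof
      fix z assume "z \<in> I"
      then have "z \<in> ?K2" using K2I' by simp
      then obtain r j where rj: "z = r * x + j" "j \<in> J" by blast
      have "(r - \<rho> r) * x \<in> J" using Mx rho_diff by blast
      then have jj: "(r - \<rho> r) * x + j \<in> J" using li_add[OF lJ] rj(2) by blast
      have "z = \<rho> r * x + ((r - \<rho> r) * x + j)" using rj by (simp add: left_diff_distrib)
      then have "z = ?f (\<rho> r, (r - \<rho> r) * x + j)" by simp
      moreover have "(\<rho> r, (r - \<rho> r) * x + j) \<in> range \<rho> \<times> J" using jj by simp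
      ultimately show "z \<in> ?f ` (range \<rho> \<times> J)" by (rule image_eqI)
    qed
    have "card I \<le> card (?f ` (range \<rho> \<times> J))" by (rule card_mono[OF finite sub])
    also have "\<dots> \<le> card (range \<rho> \<times> J)" by (rule card_image_le[OF finite])
    also have "\<dots> = card (range \<rho>) * card J" by (simp add: card_cartesian_product)
    also have "\<dots> \<le> q * card J" using rho_card by simp
    also have "\<dots> \<le> q * q ^ card ?SJ" using IH by simp
    finally show ?thesis using cS by simp
  qed
qed

lemma s_bound: "card (UNIV::'a set) \<le> q ^ chain_length T"
proof -
  have "{J::'a set. left_ideal J \<and> J \<subset> UNIV} = {J. left_ideal J} - {UNIV}" by auto
  then have "card {J::'a set. left_ideal J \<and> J \<subset> UNIV} = chain_length T"
    unfolding chain_length_def using li_UNIV by (simp add: card_Diff_singleton)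
  then show ?thesis using ideal_bound[OF li_UNIV] by simp
qed

lemma t_bound: "card M \<le> q ^ (chain_length T - 1)"
proof -
  have e: "{J::'a set. left_ideal J \<and> J \<subset> M} = {J. left_ideal J} - {UNIV, M}"
    using proper_sub_M M_ne by blast
  have "card ({J::'a set. left_ideal J} - {UNIV, M}) = card {J::'a set. left_ideal J} - card {UNIV, M}"
    using li_UNIV M_li by (intro card_Diff_subset) auto
  also have "card {UNIV, M} = 2" using M_ne by simp
  finally have "card {J::'a set. left_ideal J \<and> J \<subset> M} = chain_length T - 1"
    unfolding e chain_length_def by simp
  then show ?thesis using ideal_bound[OF M_li] by simp
qed

lemma q_res: "residue_order T = q" unfolding residue_order_def q_def M_def ..

end


definition pt :: "'a::ring_1 vec3 \<Rightarrow> 'a vec3 set" where "pt x = {smul x r | r. True}"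
definition span :: "'a::ring_1 vec3 \<Rightarrow> 'a vec3 \<Rightarrow> 'a vec3 set" where
  "span u v = {vadd (smul u r) (smul v s) | r s. True}"
definition free :: "'a::ring_1 vec3 \<Rightarrow> bool" where "free x = (\<forall>r. smul x r = (0,0,0) \<longrightarrow> r = 0)"

lemma hj_point_iff: "hj_point S \<longleftrightarrow> (\<exists>x. S = pt x \<and> free x)"
  unfolding hj_point_def pt_def free_def ..

lemma hj_line_iff: "hj_line S \<longleftrightarrow> (\<exists>x y. S = span x y \<and>
       (\<forall>r s. vadd (smul x r) (smul y s) = (0,0,0) \<longrightarrow> r = 0 \<and> s = 0))"
  unfolding hj_line_def span_def ..

lemma smul3[simp]: "smul (a, b, c) r = (a * r, b * r, c * r)" by (simp add: smul_def)
lemma vadd3[simp]: "vadd (a, b, c) (a', b', c') = (a + a', b + b', c + c')" by (simp add: vadd_def)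

lemma smul_smul: "smul (smul x a) b = smul x (a * b)"
  by (cases x) (simp add: mult.assoc)

lemma pt_sub_span: "w \<in> span u v \<Longrightarrow> pt w \<subseteq> span u v"
proof
  fix z assume "w \<in> span u v" "z \<in> pt w"
  then obtain r s c where "w = vadd (smul u r) (smul v s)" "z = smul w c"
    unfolding span_def pt_def by blast
  then have "z = vadd (smul u (r * c)) (smul v (s * c))"
    by (cases u, cases v) (simp add: distrib_right mult.assoc)
  then show "z \<in> span u v" unfolding span_def by blast
qed

lemma inspan: "w = vadd (smul u r) (smul v s) \<Longrightarrow> w \<in> span u v"
  unfolding span_def by blast

lemma pt_sub_span1: "pt u \<subseteq> span u v"
proof
  fix z assume "z \<in> pt u"
  then obtain r where "z = smul u r" unfolding pt_def by blast
  then have "z = vadd (smul u r) (smul v 0)" by (cases u, cases v) simp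
  then show "z \<in> span u v" unfolding span_def by blast
qed

lemma pt_unit: assumes "u * v = 1" "v * u = 1" shows "pt (smul x u) = pt x"
proof (intro equalityI subsetI)
  fix z assume "z \<in> pt (smul x u)"
  then obtain r where "z = smul x (u * r)" unfolding pt_def using smul_smul by blast
  then show "z \<in> pt x" unfolding pt_def by blast
next
  fix z assume "z \<in> pt x"
  then obtain r where "z = smul x r" unfolding pt_def by blast
  then have "z = smul (smul x u) (v * r)" using smul_smul assms
    by (metis mult.assoc mult_1)
  then show "z \<in> pt (smul x u)" unfolding pt_def by blast
qed

lemma li_Rx: "left_ideal {r * (x::'a::ring_1) | r. True}" (is "left_ideal ?Rx")
  unfolding left_ideal_def
proof (intro conjI ballI allI)
  show "0 \<in> ?Rx" by (rule CollectI, rule exI[of _ 0]) simp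
next
  fix u v assume "u \<in> ?Rx" "v \<in> ?Rx"
  then obtain r s where "u = r * x" "v = s * x" by blast
  then have "u + v = (r + s) * x" by (simp add: distrib_right)
  then show "u + v \<in> ?Rx" by blast
next
  fix u assume "u \<in> ?Rx"
  then obtain r where "u = r * x" by blast
  then have "- u = (- r) * x" by simp
  then show "- u \<in> ?Rx" by blast
next
  fix c u assume "u \<in> ?Rx"
  then obtain r where "u = r * x" by blast
  then have "c * u = (c * r) * x" by (simp add: mult.assoc)
  then show "c * u \<in> ?Rx" by blast
qed

context cr begin

lemma left_mult_comparable: "(\<exists>g. b = g * a) \<or> (\<exists>d. a = d * (b::'a))"
proof -
  have "{r * a | r. True} \<subseteq> {r * b | r. True} \<or> {r * b | r. True} \<subseteq> {r * a | r. True}"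
    using chainI[OF li_Rx li_Rx] by blast
  moreover have "a \<in> {r * a | r. True}" "b \<in> {r * b | r. True}" by (rule CollectI, rule exI[of _ 1], simp)+
  ultimately show ?thesis by blast
qed

lemma unit_factor_in_M: assumes "a = d * b" "\<not> (\<exists>g. b = g * a)" shows "d \<in> M"
proof (rule ccontr)
  assume "d \<notin> M"
  then have "b = inv' d * a" using assms(1) inv'[of d] by (simp add: mult.assoc[symmetric])
  then show False using assms(2) by blast
qed

lemma socle: "\<exists>s0. s0 \<noteq> (0::'a) \<and> (\<forall>\<mu>\<in>M. \<mu> * s0 = 0)"
proof -
  let ?S = "{I::'a set. left_ideal I \<and> I \<noteq> {0}}"
  have "UNIV \<in> ?S" using li_UNIV by (metis (mono_tags, lifting) UNIV_I mem_Collect_eq singletonD zero_neq_one)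
  then have "?S \<noteq> {}" by blast
  then obtain S where S: "S \<in> ?S" "\<forall>b\<in>?S. b \<le> S \<longrightarrow> S = b"
    using finite_has_minimal[of ?S, OF finite] by blast
  have lS: "left_ideal S" using S by blast
  then obtain s0 where s0: "s0 \<in> S" "s0 \<noteq> 0" using S li_0 by blast
  let ?Ms = "{a * s0 + j | a j. a \<in> M \<and> j \<in> {0}}"
  have lM: "left_ideal ?Ms" by (rule li_comb[OF li_zero M_li])
  have MS: "?Ms \<subseteq> S"
  proof
    fix z assume "z \<in> ?Ms"
    then obtain a where "z = a * s0" by auto
    then show "z \<in> S" using lS s0 unfolding left_ideal_def by blast
  qed
  show ?thesis
  proof (cases "?Ms = {0}")
    case True
    then have "\<forall>\<mu>\<in>M. \<mu> * s0 = 0" by auto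
    then show ?thesis using s0 by blast
  next
    case False
    then have "?Ms = S" using S(2) lM MS by blast
    then obtain a where a: "a \<in> M" "s0 = a * s0" using s0 by auto
    then have "(1 - a) * s0 \<in> {0}" by (simp add: left_diff_distrib)
    then have "s0 \<in> {0}" using left_cancel_one_minus[OF a(1) _ li_zero] by blast
    then show ?thesis using s0 by simp
  qed
qed

lemma free_unit: assumes "free x" shows "fst x \<notin> M \<or> fst (snd x) \<notin> M \<or> snd (snd x) \<notin> M"
proof (rule ccontr)
  assume "\<not> ?thesis"
  then have h: "fst x \<in> M" "fst (snd x) \<in> M" "snd (snd x) \<in> M" by auto
  obtain s0 where s0: "s0 \<noteq> 0" "\<forall>\<mu>\<in>M. \<mu> * s0 = 0" using socle by blast
  have "smul x s0 = (0,0,0)" using h s0 unfolding smul_def by simp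
  then show False using assms s0 unfolding free_def by blast
qed

definition pencil :: "'a vec3 set \<Rightarrow> 'a vec3 set \<Rightarrow> bool" where
  "pencil P Q \<longleftrightarrow> (\<exists>(I::('a + 'a) set) L. card I \<le> card (UNIV::'a set) + card M \<and>
     (\<forall>i\<in>I. hj_line (L i) \<and> P \<subseteq> L i) \<and> (\<forall>Z. hj_point Z \<longrightarrow> (\<exists>i\<in>I. Z \<subseteq> L i)) \<and>
     (\<exists>i\<in>I. \<exists>j\<in>I. i \<noteq> j \<and> Q \<subseteq> L i \<and> Q \<subseteq> L j))"

lemma pencil_norm:
  fixes a b a' b' :: 'a
  assumes "a' - a \<in> M" "b' - b \<in> M"
  shows "pencil (pt (1, a, b)) (pt (1, a', b'))"
proof -
  define x where "x = ((1::'a), a, b)"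
  define L where "L i = (case i of Inl g \<Rightarrow> span x (0, 1, g) | Inr d \<Rightarrow> span x (0, d, 1))" for i
  define I :: "('a + 'a) set" where "I = range Inl \<union> Inr ` M"
  have cI: "card I = card (UNIV::'a set) + card M"
  proof -
    have c1: "card (range (Inl::'a \<Rightarrow> 'a + 'a)) = card (UNIV::'a set)" by (rule card_image) simp
    have c2: "card ((Inr::'a \<Rightarrow> 'a + 'a) ` M) = card M" by (rule card_image) simp
    have d: "range (Inl::'a \<Rightarrow> 'a + 'a) \<inter> (Inr::'a \<Rightarrow> 'a + 'a) ` M = {}" by blast
    show ?thesis unfolding I_def using card_Un_disjoint[OF finite finite d] c1 c2 by simp
  qed
  have lines: "hj_line (L i) \<and> pt x \<subseteq> L i" for i
  proof (cases i)
    case (Inl g)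
    have "\<forall>r s. vadd (smul x r) (smul (0, 1, g) s) = (0,0,0) \<longrightarrow> r = 0 \<and> s = 0"
      unfolding x_def by simp
    then have "hj_line (span x (0, 1, g))" unfolding hj_line_iff by blast
    moreover have "pt x \<subseteq> span x (0, 1, g)" by (rule pt_sub_span1)
    ultimately show ?thesis unfolding Inl L_def by simp
  next
    case (Inr d)
    have "\<forall>r s. vadd (smul x r) (smul (0, d, 1) s) = (0,0,0) \<longrightarrow> r = 0 \<and> s = 0"
      unfolding x_def by simp
    then have "hj_line (span x (0, d, 1))" unfolding hj_line_iff by blast
    moreover have "pt x \<subseteq> span x (0, d, 1)" by (rule pt_sub_span1)
    ultimately show ?thesis unfolding Inr L_def by simp
  qed
  have LI: "L (Inl g) = span x (0, 1, g)" "L (Inr d) = span x (0, d, 1)" for g d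
    unfolding L_def by simp_all
  have II: "Inl g \<in> I" "d \<in> M \<Longrightarrow> Inr d \<in> I" for g d unfolding I_def by auto
  have cover: "\<exists>i\<in>I. Z \<subseteq> L i" if Zp: "hj_point Z" for Z
  proof -
    obtain w where w: "Z = pt w" using Zp unfolding hj_point_iff by blast
    obtain w1 w2 w3 where ww: "w = (w1, w2, w3)" using prod_cases3 by blast
    define al where "al = w2 - a * w1"
    define be where "be = w3 - b * w1"
    have e2: "a * w1 + al = w2" unfolding al_def by simp
    have e3: "b * w1 + be = w3" unfolding be_def by simp
    show ?thesis
    proof (cases "\<exists>g. be = g * al")
      case True
      then obtain g where g: "be = g * al" by blast
      have "w = vadd (smul x w1) (smul (0, 1, g) al)"
        unfolding ww x_def using e2 e3 g by simp
      then have "w \<in> span x (0, 1, g)" by (rule inspan)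
      then have "Z \<subseteq> L (Inl g)" unfolding LI w by (rule pt_sub_span)
      then show ?thesis using II(1) by blast
    next
      case False
      then obtain d where d: "al = d * be" using left_mult_comparable by blast
      have dM: "d \<in> M" using unit_factor_in_M[OF d False] .
      have "w = vadd (smul x w1) (smul (0, d, 1) be)"
        unfolding ww x_def using e2 e3 d by simp
      then have "w \<in> span x (0, d, 1)" by (rule inspan)
      then have "Z \<subseteq> L (Inr d)" unfolding LI w by (rule pt_sub_span)
      then show ?thesis using II(2)[OF dM] by blast
    qed
  qed
  define al where "al = a' - a"
  define be where "be = b' - b"
  have alM: "al \<in> M" and beM: "be \<in> M" using assms al_def be_def by auto
  have e2: "a + al = a'" unfolding al_def by simp
  have e3: "b + be = b'" unfolding be_def by simp
  have two: "\<exists>i\<in>I. \<exists>j\<in>I. i \<noteq> j \<and> pt (1, a', b') \<subseteq> L i \<and> pt (1, a', b') \<subseteq> L j"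
  proof (cases "\<exists>g. be = g * al")
    case True
    then obtain g where g: "be = g * al" by blast
    obtain mu where mu: "mu \<noteq> 0" "mu * al = 0" using ann_exists[OF alM] by blast
    have g2: "be = (g + mu) * al" using g mu by (simp add: distrib_right)
    have inL: "pt (1, a', b') \<subseteq> L (Inl h)" if "be = h * al" for h
    proof -
      have "(1, a', b') = vadd (smul x 1) (smul (0, 1, h) al)"
        unfolding x_def using that e2 e3 by simp
      then have "(1, a', b') \<in> span x (0, 1, h)" by (rule inspan)
      then show ?thesis unfolding LI by (rule pt_sub_span)
    qed
    have "Inl g \<noteq> Inl (g + mu)" using mu by simp
    then show ?thesis using inL[OF g] inL[OF g2]
      by (intro bexI[OF _ II(1)[of g]] bexI[OF _ II(1)[of "g + mu"]] conjI)
  next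
    case False
    then obtain d where d: "al = d * be" using left_mult_comparable by blast
    have dM: "d \<in> M" using unit_factor_in_M[OF d False] .
    have be0: "be \<noteq> 0"
    proof
      assume "be = 0"
      then have "be = 0 * al" by simp
      then have "\<exists>g. be = g * al" by (rule exI)
      then show False using False by (rule notE[rotated])
    qed
    obtain mu where mu: "mu \<noteq> 0" "mu * be = 0" using ann_exists[OF beM] by blast
    have muM: "mu \<in> M"
    proof (rule ccontr)
      assume nm: "mu \<notin> M"
      have "inv' mu * (mu * be) = (inv' mu * mu) * be" by (simp add: mult.assoc)
      also have "\<dots> = be" using inv'(1)[OF nm] by simp
      finally have "be = inv' mu * (mu * be)" by simp
      then show False using mu be0 by simp
    qed
    have dmM: "d + mu \<in> M" using M_add dM muM by blast
    have d2: "al = (d + mu) * be" using d mu by (simp add: distrib_right)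
    have inL: "pt (1, a', b') \<subseteq> L (Inr h)" if "al = h * be" for h
    proof -
      have "(1, a', b') = vadd (smul x 1) (smul (0, h, 1) be)"
        unfolding x_def using that e2 e3 by simp
      then have "(1, a', b') \<in> span x (0, h, 1)" by (rule inspan)
      then show ?thesis unfolding LI by (rule pt_sub_span)
    qed
    have "Inr d \<noteq> Inr (d + mu)" using mu by simp
    then show ?thesis using inL[OF d] inL[OF d2]
      by (intro bexI[OF _ II(2)[OF dM]] bexI[OF _ II(2)[OF dmM]] conjI)
  qed
  have lines': "\<forall>i\<in>I. hj_line (L i) \<and> pt x \<subseteq> L i" using lines by blast
  have cover': "\<forall>Z. hj_point Z \<longrightarrow> (\<exists>i\<in>I. Z \<subseteq> L i)" using cover by blast
  have "pencil (pt x) (pt (1, a', b'))" unfolding pencil_def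
    apply (rule exI[of _ I], rule exI[of _ L])
    using cI lines' cover' two by simp
  then show ?thesis unfolding x_def .
qed

end


definition good_sw :: "('a::ring_1 vec3 \<Rightarrow> 'a vec3) \<Rightarrow> bool" where
  "good_sw sw \<longleftrightarrow> (\<forall>x. sw (sw x) = x) \<and> (\<forall>x r. sw (smul x r) = smul (sw x) r) \<and>
     (\<forall>x y. sw (vadd x y) = vadd (sw x) (sw y)) \<and> sw (0,0,0) = (0,0,0)"

definition sw12 :: "'a vec3 \<Rightarrow> 'a vec3" where "sw12 x = (fst (snd x), fst x, snd (snd x))"
definition sw13 :: "'a vec3 \<Rightarrow> 'a vec3" where "sw13 x = (snd (snd x), fst (snd x), fst x)"

lemma good_sw12: "good_sw (sw12 :: 'a::ring_1 vec3 \<Rightarrow> 'a vec3)"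
  unfolding good_sw_def sw12_def smul_def vadd_def by simp
lemma good_sw13: "good_sw (sw13 :: 'a::ring_1 vec3 \<Rightarrow> 'a vec3)"
  unfolding good_sw_def sw13_def smul_def vadd_def by simp

lemma sw_inv: "good_sw sw \<Longrightarrow> sw (sw x) = x" unfolding good_sw_def by blast
lemma sw_smul: "good_sw sw \<Longrightarrow> sw (smul x r) = smul (sw x) r" unfolding good_sw_def by blast
lemma sw_vadd: "good_sw sw \<Longrightarrow> sw (vadd x y) = vadd (sw x) (sw y)" unfolding good_sw_def by blast
lemma sw_0: "good_sw sw \<Longrightarrow> sw (0,0,0) = (0,0,0)" unfolding good_sw_def by blast

lemma sw_img_img: "good_sw sw \<Longrightarrow> sw ` sw ` A = A"
  by (simp add: image_image sw_inv)

lemma sw_pt: assumes "good_sw sw" shows "sw ` pt x = pt (sw x)"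
proof -
  have "sw ` pt x = {sw (smul x r) | r. True}" unfolding pt_def by blast
  also have "\<dots> = pt (sw x)" unfolding pt_def sw_smul[OF assms] ..
  finally show ?thesis .
qed

lemma sw_span: assumes "good_sw sw" shows "sw ` span u v = span (sw u) (sw v)"
proof -
  have "sw ` span u v = {sw (vadd (smul u r) (smul v s)) | r s. True}" unfolding span_def by blast
  also have "\<dots> = span (sw u) (sw v)" unfolding span_def sw_smul[OF assms] sw_vadd[OF assms] ..
  finally show ?thesis .
qed

lemma sw_zero_iff: assumes "good_sw sw" shows "sw z = (0,0,0) \<longleftrightarrow> z = (0,0,0)"
  using sw_inv[OF assms] sw_0[OF assms] by metis

lemma sw_free: assumes "good_sw sw" "free x" shows "free (sw x)"
  unfolding free_def
proof (intro allI impI)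
  fix r assume "smul (sw x) r = (0,0,0)"
  then have "sw (smul x r) = (0,0,0)" using sw_smul[OF assms(1)] by simp
  then have "smul x r = (0,0,0)" using sw_zero_iff[OF assms(1)] by blast
  then show "r = 0" using assms(2) unfolding free_def by blast
qed

lemma sw_point: assumes "good_sw sw" "hj_point Z" shows "hj_point (sw ` Z)"
proof -
  obtain x where "Z = pt x" "free x" using assms(2) unfolding hj_point_iff by blast
  then have "sw ` Z = pt (sw x)" "free (sw x)" using sw_pt[OF assms(1)] sw_free[OF assms(1)] by auto
  then show ?thesis unfolding hj_point_iff by blast
qed

lemma sw_line: assumes "good_sw sw" "hj_line L" shows "hj_line (sw ` L)"
proof -
  obtain u v where uv: "L = span u v" "\<forall>r s. vadd (smul u r) (smul v s) = (0,0,0) \<longrightarrow> r = 0 \<and> s = 0"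
    using assms(2) unfolding hj_line_iff by blast
  have "sw ` L = span (sw u) (sw v)" using uv(1) sw_span[OF assms(1)] by simp
  moreover have "\<forall>r s. vadd (smul (sw u) r) (smul (sw v) s) = (0,0,0) \<longrightarrow> r = 0 \<and> s = 0"
  proof (intro allI impI)
    fix r s assume "vadd (smul (sw u) r) (smul (sw v) s) = (0,0,0)"
    then have "sw (vadd (smul u r) (smul v s)) = (0,0,0)"
      using sw_smul[OF assms(1)] sw_vadd[OF assms(1)] by simp
    then have "vadd (smul u r) (smul v s) = (0,0,0)" using sw_zero_iff[OF assms(1)] by blast
    then show "r = 0 \<and> s = 0" using uv(2) by blast
  qed
  ultimately show ?thesis unfolding hj_line_iff by blast
qed

context cr begin

lemma pencil_sw: assumes sw: "good_sw sw" and p: "pencil P Q" shows "pencil (sw ` P) (sw ` Q)"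
proof -
  obtain I :: "('a + 'a) set" and L where
    c: "card I \<le> card (UNIV::'a set) + card M" and
    l: "\<forall>i\<in>I. hj_line (L i) \<and> P \<subseteq> L i" and
    cv: "\<forall>Z. hj_point Z \<longrightarrow> (\<exists>i\<in>I. Z \<subseteq> L i)" and
    t: "\<exists>i\<in>I. \<exists>j\<in>I. i \<noteq> j \<and> Q \<subseteq> L i \<and> Q \<subseteq> L j"
    using p unfolding pencil_def by blast
  define L' where "L' i = sw ` L i" for i
  have l': "\<forall>i\<in>I. hj_line (L' i) \<and> sw ` P \<subseteq> L' i"
    unfolding L'_def using l sw_line[OF sw] by blast
  have cv': "\<forall>Z. hj_point Z \<longrightarrow> (\<exists>i\<in>I. Z \<subseteq> L' i)"
  proof (intro allI impI)
    fix Z :: "'a vec3 set" assume "hj_point Z"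
    then have "hj_point (sw ` Z)" by (rule sw_point[OF sw])
    then obtain i where i: "i \<in> I" "sw ` Z \<subseteq> L i" using cv by blast
    have "sw ` sw ` Z \<subseteq> sw ` L i" by (rule image_mono[OF i(2)])
    then have "Z \<subseteq> L' i" unfolding L'_def sw_img_img[OF sw] .
    then show "\<exists>i\<in>I. Z \<subseteq> L' i" using i(1) by blast
  qed
  have t': "\<exists>i\<in>I. \<exists>j\<in>I. i \<noteq> j \<and> sw ` Q \<subseteq> L' i \<and> sw ` Q \<subseteq> L' j"
    unfolding L'_def using t by blast
  show ?thesis unfolding pencil_def
    apply (rule exI[of _ I], rule exI[of _ L'])
    using c l' cv' t' by simp
qed

lemma pencil_gen:
  assumes "fst x \<notin> M" "fst y \<notin> M"
    and "fst (snd x) * inv' (fst x) - fst (snd y) * inv' (fst y) \<in> M"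
    and "snd (snd x) * inv' (fst x) - snd (snd y) * inv' (fst y) \<in> M"
  shows "pencil (pt x) (pt y)"
proof -
  obtain x1 x2 x3 where xx: "x = (x1, x2, x3)" using prod_cases3 by blast
  obtain y1 y2 y3 where yy: "y = (y1, y2, y3)" using prod_cases3 by blast
  have x1: "x1 \<notin> M" and y1: "y1 \<notin> M" using assms(1,2) xx yy by auto
  have px: "pt x = pt (1, x2 * inv' x1, x3 * inv' x1)"
  proof -
    have "pt (smul x (inv' x1)) = pt x" using pt_unit inv'[OF x1] by blast
    moreover have "smul x (inv' x1) = (1, x2 * inv' x1, x3 * inv' x1)" using xx inv'[OF x1] by simp
    ultimately show ?thesis by simp
  qed
  have py: "pt y = pt (1, y2 * inv' y1, y3 * inv' y1)"
  proof -
    have "pt (smul y (inv' y1)) = pt y" using pt_unit inv'[OF y1] by blast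
    moreover have "smul y (inv' y1) = (1, y2 * inv' y1, y3 * inv' y1)" using yy inv'[OF y1] by simp
    ultimately show ?thesis by simp
  qed
  have d2: "y2 * inv' y1 - x2 * inv' x1 \<in> M"
    using M_uminus[OF assms(3)] xx yy by simp
  have d3: "y3 * inv' y1 - x3 * inv' x1 \<in> M"
    using M_uminus[OF assms(4)] xx yy by simp
  show ?thesis unfolding px py by (rule pencil_norm[OF d2 d3])
qed

definition "rep P = (SOME x. P = pt x \<and> free x)"

lemma rep: assumes "hj_point P" shows "P = pt (rep P)" "free (rep P)"
proof -
  have e: "\<exists>x. P = pt x \<and> free x" using assms unfolding hj_point_iff .
  have "P = pt (rep P) \<and> free (rep P)" unfolding rep_def by (rule someI_ex[OF e])
  then show "P = pt (rep P)" "free (rep P)" by auto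
qed

definition cls :: "'a vec3 set \<Rightarrow> nat \<times> 'a \<times> 'a" where
  "cls P = (let x = rep P in
     if fst x \<notin> M then (0, \<rho> (fst (snd x) * inv' (fst x)), \<rho> (snd (snd x) * inv' (fst x)))
     else if fst (snd x) \<notin> M then (1, 0, \<rho> (snd (snd x) * inv' (fst (snd x))))
     else (2, 0, 0))"

definition "BB = ({0::nat} \<times> range \<rho> \<times> range \<rho>) \<union> ({1} \<times> {0::'a} \<times> range \<rho>) \<union> {(2, 0, 0)}"

lemma cls_BB: "cls P \<in> BB"
  unfolding cls_def BB_def Let_def by auto

lemma card_BB: "card BB \<le> q * q + q + 1"
proof -
  have c1: "card ({0::nat} \<times> range \<rho> \<times> range \<rho>) \<le> q * q"
    using rho_card by (simp add: card_cartesian_product mult_le_mono)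
  have c2: "card ({1::nat} \<times> {0::'a} \<times> range \<rho>) \<le> q"
    using rho_card by (simp add: card_cartesian_product)
  define A where "A = ({0::nat} \<times> range \<rho> \<times> range \<rho>)"
  define B where "B = ({1::nat} \<times> {0::'a} \<times> range \<rho>)"
  have "card BB \<le> card (A \<union> B) + card {(2::nat, 0::'a, 0::'a)}"
    unfolding BB_def A_def B_def by (rule card_Un_le)
  moreover have "card (A \<union> B) \<le> card A + card B" by (rule card_Un_le)
  moreover have "card {(2::nat, 0::'a, 0::'a)} = 1" by simp
  ultimately show ?thesis using c1 c2 unfolding A_def B_def by linarith
qed

lemma pencil_cls: assumes "hj_point P" "hj_point Q" "cls P = cls Q" shows "pencil P Q"
proof -
  define x where "x = rep P"
  define y where "y = rep Q"
  have P: "P = pt x" "free x" using rep[OF assms(1)] x_def by auto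
  have Q: "Q = pt y" "free y" using rep[OF assms(2)] y_def by auto
  obtain x1 x2 x3 where xx: "x = (x1, x2, x3)" using prod_cases3 by blast
  obtain y1 y2 y3 where yy: "y = (y1, y2, y3)" using prod_cases3 by blast
  have cP: "cls P = (if x1 \<notin> M then (0, \<rho> (x2 * inv' x1), \<rho> (x3 * inv' x1))
     else if x2 \<notin> M then (1, 0, \<rho> (x3 * inv' x2)) else (2, 0, 0))"
    unfolding cls_def Let_def x_def[symmetric] xx by simp
  have cQ: "cls Q = (if y1 \<notin> M then (0, \<rho> (y2 * inv' y1), \<rho> (y3 * inv' y1))
     else if y2 \<notin> M then (1, 0, \<rho> (y3 * inv' y2)) else (2, 0, 0))"
    unfolding cls_def Let_def y_def[symmetric] yy by simp
  have fx: "x1 \<notin> M \<or> x2 \<notin> M \<or> x3 \<notin> M" using free_unit[OF P(2)] xx by simp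
  have fy: "y1 \<notin> M \<or> y2 \<notin> M \<or> y3 \<notin> M" using free_unit[OF Q(2)] yy by simp
  show ?thesis
  proof (cases "x1 \<notin> M")
    case True
    then have "y1 \<notin> M" using assms(3) cP cQ by (auto split: if_splits)
    then have "\<rho> (x2 * inv' x1) = \<rho> (y2 * inv' y1)" "\<rho> (x3 * inv' x1) = \<rho> (y3 * inv' y1)"
      using True assms(3) cP cQ by auto
    then have "x2 * inv' x1 - y2 * inv' y1 \<in> M" "x3 * inv' x1 - y3 * inv' y1 \<in> M"
      using rho_eq by auto
    then show ?thesis unfolding P(1) Q(1) xx yy
      using True \<open>y1 \<notin> M\<close> by (intro pencil_gen) auto
  next
    case False
    then have x1M: "x1 \<in> M" by simp
    show ?thesis
    proof (cases "x2 \<notin> M")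
      case True
      then have y12: "y1 \<in> M" "y2 \<notin> M" using assms(3) cP cQ x1M by (auto split: if_splits)
      then have "\<rho> (x3 * inv' x2) = \<rho> (y3 * inv' y2)"
        using True x1M assms(3) cP cQ by auto
      then have d3: "x3 * inv' x2 - y3 * inv' y2 \<in> M" using rho_eq by auto
      have d2: "x1 * inv' x2 - y1 * inv' y2 \<in> M" using M_diff M_rmult x1M y12(1) by blast
      have "pencil (pt (sw12 x)) (pt (sw12 y))" unfolding xx yy sw12_def
        using True y12 d2 d3 by (intro pencil_gen) auto
      then have "pencil (sw12 ` pt (sw12 x)) (sw12 ` pt (sw12 y))" by (rule pencil_sw[OF good_sw12])
      then show ?thesis unfolding P(1) Q(1) sw_pt[OF good_sw12] sw_inv[OF good_sw12] .
    next
      case False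
      then have x2M: "x2 \<in> M" by simp
      then have x3: "x3 \<notin> M" using fx x1M by simp
      have y12: "y1 \<in> M" "y2 \<in> M" using assms(3) cP cQ x1M x2M by (auto split: if_splits)
      then have y3: "y3 \<notin> M" using fy by simp
      have d2: "x2 * inv' x3 - y2 * inv' y3 \<in> M" using M_diff M_rmult x2M y12(2) by blast
      have d3: "x1 * inv' x3 - y1 * inv' y3 \<in> M" using M_diff M_rmult x1M y12(1) by blast
      have "pencil (pt (sw13 x)) (pt (sw13 y))" unfolding xx yy sw13_def
        using x3 y3 d2 d3 by (intro pencil_gen) auto
      then have "pencil (sw13 ` pt (sw13 x)) (sw13 ` pt (sw13 y))" by (rule pencil_sw[OF good_sw13])
      then show ?thesis unfolding P(1) Q(1) sw_pt[OF good_sw13] sw_inv[OF good_sw13] .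
    qed
  qed
qed

lemma pigeon:
  fixes K :: "'a vec3 set multiset"
  assumes pts: "\<forall>p\<in>#K. hj_point p" and sz: "card BB < size K"
  shows "\<exists>P Q. add_mset P {#Q#} \<subseteq># K \<and> cls P = cls Q"
proof (rule ccontr)
  assume none: "\<not> ?thesis"
  have c1: "count K P \<le> 1" for P
  proof (rule ccontr)
    assume "\<not> count K P \<le> 1"
    then have "add_mset P {#P#} \<subseteq># K" unfolding subseteq_mset_def by auto
    then show False using none by blast
  qed
  have inj: "inj_on cls (set_mset K)"
  proof (rule inj_onI)
    fix P Q assume PQ: "P \<in># K" "Q \<in># K" "cls P = cls Q"
    show "P = Q"
    proof (rule ccontr)
      assume ne: "P \<noteq> Q"
      have "add_mset P {#Q#} \<subseteq># K" unfolding subseteq_mset_def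
      proof
        fix z
        show "count (add_mset P {#Q#}) z \<le> count K z"
          using PQ ne by (cases "z = P"; cases "z = Q") (auto simp: Suc_le_eq)
      qed
      then show False using none PQ(3) by blast
    qed
  qed
  have "size K = sum (count K) (set_mset K)" by (rule size_multiset_overloaded_eq)
  also have "\<dots> = sum (\<lambda>_. 1) (set_mset K)"
  proof (rule sum.cong[OF refl])
    fix z assume "z \<in> set_mset K"
    then have "count K z \<noteq> 0" by simp
    then show "count K z = 1" using c1[of z] by linarith
  qed
  also have "\<dots> = card (set_mset K)" by simp
  also have "\<dots> = card (cls ` set_mset K)" using card_image[OF inj] by simp
  also have "\<dots> \<le> card BB"
  proof (rule card_mono)
    show "finite BB" unfolding BB_def by simp
    show "cls ` set_mset K \<subseteq> BB" using cls_BB by blast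
  qed
  finally show False using sz by simp
qed

lemma arith_aux: assumes "m \<ge> 3" "(q::nat) \<ge> 2" shows "q * q + q < q ^ m + q ^ (m - 1)"
proof -
  have "q ^ 3 \<le> q ^ m" using assms by (intro power_increasing) auto
  moreover have "q ^ 2 \<le> q ^ (m - 1)" using assms by (intro power_increasing) auto
  moreover have "q * q < q ^ 3" using assms by (simp add: power3_eq_cube)
  moreover have "q < q ^ 2" using assms by (simp add: power2_eq_square)
  ultimately show ?thesis by linarith
qed

lemma no_hyperoval:
  fixes K :: "'a vec3 set multiset"
  assumes m3: "chain_length T \<ge> 3"
  shows "\<not> hj_arc K (q ^ chain_length T + q ^ (chain_length T - 1) + 1) 2"
proof
  define m where "m = chain_length T"
  define n where "n = q ^ m + q ^ (m - 1) + 1"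
  assume "hj_arc K (q ^ chain_length T + q ^ (chain_length T - 1) + 1) 2"
  then have arc: "hj_arc K n 2" unfolding n_def m_def .
  have pts: "\<forall>p\<in>#K. hj_point p" and sz: "size K = n" using arc unfolding hj_arc_def by auto
  have ar: "q * q + q < q ^ m + q ^ (m - 1)" using arith_aux m3 q_ge2 unfolding m_def by blast
  have "card BB < size K" using card_BB ar sz unfolding n_def by linarith
  then obtain P Q where PQ: "add_mset P {#Q#} \<subseteq># K" "cls P = cls Q" using pigeon[OF pts] by blast
  have "P \<in># K" "Q \<in># K" using PQ(1) by (auto dest: mset_subset_eqD)
  then have "hj_point P" "hj_point Q" using pts by auto
  then have "pencil P Q" using pencil_cls PQ(2) by blast
  then obtain I :: "('a + 'a) set" and L where
    c: "card I \<le> card (UNIV::'a set) + card M" and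
    l: "\<forall>i\<in>I. hj_line (L i) \<and> P \<subseteq> L i" and
    cv: "\<forall>Z. hj_point Z \<longrightarrow> (\<exists>i\<in>I. Z \<subseteq> L i)" and
    t: "\<exists>i\<in>I. \<exists>j\<in>I. i \<noteq> j \<and> Q \<subseteq> L i \<and> Q \<subseteq> L j"
    unfolding pencil_def by blast
  obtain i j where ij: "i \<in> I" "j \<in> I" "i \<noteq> j" "Q \<subseteq> L i" "Q \<subseteq> L j" using t by blast
  have "n \<le> card I" by (rule count_lemma[OF arc PQ(1) finite l cv ij])
  moreover have "card (UNIV::'a set) + card M \<le> q ^ m + q ^ (m - 1)"
    using s_bound t_bound unfolding m_def by (simp add: add_mono)
  ultimately show False using c unfolding n_def by linarith
qed

end

theorem mainTheorem2:
  fixes T :: "'a::{ring_1,finite} itself"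
  assumes "chain_ring T"
    and "chain_length T \<ge> 3"
  shows "\<not> (\<exists>A :: 'a vec3 set multiset.
            hj_arc A (residue_order T ^ chain_length T + residue_order T ^ (chain_length T - 1) + 1) 2)"
proof -
  interpret cr T by (rule cr.intro[OF assms(1)])
  show ?thesis using no_hyperoval[OF assms(2)] unfolding q_res by blast
qed


end
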